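(* Let $\Sigma$ be a finite set, $k>2$ an integer, and $n\ge 1$. For every sequence of sets $X_1,\ldots,X_n\subseteq\Sigma$, each of size $k$, with $|\Sigma|<(k-2)\log_2(n/3)$, there exist indices $1\le i<j\le n$ and sets $X_i',\ldots,X_j'$ such that for each $\ell\in\{i,\ldots,j\}$, $X_\ell'\subseteq X_\ell$ and $|X_\ell'|\ge 2$, and for each $a\in\Sigma$ the number of sets among $X_i',\ldots,X_j'$ that contain $a$ is even. *)

theory Defs
  imports Complex_Main
begin

end

theory Submission
  imports Defs
begin


lemma hall_sdr:
  fixes A :: "'i \<Rightarrow> 'x set"
  assumes "finite D" "\<forall>e\<in>D. finite (A e)"
    and "\<forall>S\<subseteq>D. card S \<le> card (\<Union>(A ` S))"
  shows "\<exists>r. (\<forall>e\<in>D. r e \<in> A e) \<and> inj_on r D"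
  using assms
proof (induction "card D" arbitrary: D A rule: less_induct)
  case less
  show ?case
  proof (cases "D = {}")
    case True then show ?thesis by auto
  next
    case False
    show ?thesis
    proof (cases "\<exists>S. S \<subseteq> D \<and> S \<noteq> {} \<and> S \<noteq> D \<and> card (\<Union>(A ` S)) = card S")
      case True
      then obtain S where S: "S \<subseteq> D" "S \<noteq> {}" "S \<noteq> D" "card (\<Union>(A ` S)) = card S" by blast
      have fS: "finite S" using S(1) less.prems(1) finite_subset by blast
      have cS: "card S < card D" using S less.prems(1) by (meson psubsetI psubset_card_mono)
      have "\<exists>r. (\<forall>e\<in>S. r e \<in> A e) \<and> inj_on r S"
        apply (rule less.hyps[OF cS fS])
        using less.prems S by auto
      then obtain r1 where r1: "\<forall>e\<in>S. r1 e \<in> A e" "inj_on r1 S" by blast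
      define A2 where "A2 e = A e - \<Union>(A ` S)" for e
      have fD2: "finite (D - S)" using less.prems(1) by blast
      have cD2: "card (D - S) < card D"
      proof -
        have "card (D - S) = card D - card S" using S(1) fS by (simp add: card_Diff_subset)
        moreover have "card S > 0" using fS S(2) by (simp add: card_gt_0_iff)
        ultimately show ?thesis using cS by linarith
      qed
      have finU: "finite (\<Union>(A ` S))" using fS S(1) less.prems(2) by blast
      have "\<exists>r. (\<forall>e\<in>D - S. r e \<in> A2 e) \<and> inj_on r (D - S)"
      proof (rule less.hyps[OF cD2 fD2])
        show "\<forall>e\<in>D - S. finite (A2 e)" using less.prems(2) A2_def by auto
        show "\<forall>T\<subseteq>D - S. card T \<le> card (\<Union> (A2 ` T))"
        proof (intro allI impI)
          fix T assume T: "T \<subseteq> D - S"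
          have fT: "finite T" using T fD2 finite_subset by blast
          have eq: "\<Union>(A2 ` T) = \<Union>(A ` (T \<union> S)) - \<Union>(A ` S)" unfolding A2_def by auto
          have finTS: "finite (\<Union>(A ` (T \<union> S)))" using fT fS T S(1) less.prems(2) by blast
          have "card (\<Union>(A2 ` T)) = card (\<Union>(A ` (T \<union> S))) - card (\<Union>(A ` S))"
            unfolding eq by (rule card_Diff_subset[OF finU]) auto
          moreover have "card (T \<union> S) \<le> card (\<Union>(A ` (T \<union> S)))"
          proof -
            have "T \<union> S \<subseteq> D" using T S(1) by auto
            then show ?thesis using less.prems(3) by blast
          qed
          moreover have "card (T \<union> S) = card T + card S"
            using T fT fS by (intro card_Un_disjoint) auto
          ultimately show "card T \<le> card (\<Union> (A2 ` T))" using S(4) by linarith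
        qed
      qed
      then obtain r2 where r2: "\<forall>e\<in>D - S. r2 e \<in> A2 e" "inj_on r2 (D - S)" by blast
      define r where "r e = (if e \<in> S then r1 e else r2 e)" for e
      have "\<forall>e\<in>D. r e \<in> A e" using r1 r2 unfolding r_def A2_def by auto
      moreover have "inj_on r D"
      proof (rule inj_onI)
        fix x y assume xy: "x \<in> D" "y \<in> D" "r x = r y"
        show "x = y"
        proof (cases "x \<in> S"; cases "y \<in> S")
          assume "x \<in> S" "y \<in> S" then show ?thesis using xy r1(2) unfolding r_def by (auto dest: inj_onD)
        next
          assume "x \<notin> S" "y \<notin> S" then show ?thesis using xy r2(2) unfolding r_def by (auto dest: inj_onD)
        next
          assume a: "x \<in> S" "y \<notin> S"
          then have "r x \<in> \<Union>(A ` S)" "r y \<notin> \<Union>(A ` S)" using r1 r2 xy unfolding r_def A2_def by auto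
          then show ?thesis using xy by simp
        next
          assume a: "x \<notin> S" "y \<in> S"
          have "r y \<in> \<Union>(A ` S)" using a r1 unfolding r_def by auto
          moreover have "r x \<notin> \<Union>(A ` S)" using a r2 xy(1) unfolding r_def A2_def by auto
          ultimately
          show ?thesis using xy by simp
        qed
      qed
      ultimately show ?thesis by blast
    next
      case False2: False
      obtain e0 where e0: "e0 \<in> D" using \<open>D \<noteq> {}\<close> by blast
      have "card {e0} \<le> card (\<Union>(A ` {e0}))" using less.prems(3) e0 by blast
      then have "A e0 \<noteq> {}" by auto
      then obtain x where x: "x \<in> A e0" by blast
      define A' where "A' e = A e - {x}" for e
      have fD': "finite (D - {e0})" using less.prems(1) by blast
      have cD': "card (D - {e0}) < card D" using e0 less.prems(1) by (metis card_Diff1_less)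
      have "\<exists>r. (\<forall>e\<in>D - {e0}. r e \<in> A' e) \<and> inj_on r (D - {e0})"
      proof (rule less.hyps[OF cD' fD'])
        show "\<forall>e\<in>D - {e0}. finite (A' e)" using less.prems(2) A'_def by auto
        show "\<forall>T\<subseteq>D - {e0}. card T \<le> card (\<Union> (A' ` T))"
        proof (intro allI impI)
          fix T assume T: "T \<subseteq> D - {e0}"
          show "card T \<le> card (\<Union> (A' ` T))"
          proof (cases "T = {}")
            case True then show ?thesis by simp
          next
            case False
            have fT: "finite T" using T fD' finite_subset by blast
            have finU: "finite (\<Union>(A ` T))" using fT T less.prems(2) by blast
            have le: "card T \<le> card (\<Union>(A ` T))" using less.prems(3) T by auto
            have "card (\<Union>(A ` T)) \<noteq> card T" using False2 T False e0 by blast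
            then have lt: "card T < card (\<Union>(A ` T))" using le by linarith
            have eq: "\<Union>(A' ` T) = \<Union>(A ` T) - {x}" unfolding A'_def by auto
            have "card (\<Union>(A ` T)) - card {x} \<le> card (\<Union>(A' ` T))"
              unfolding eq by (rule diff_card_le_card_Diff) simp
            then show ?thesis using lt by simp
          qed
        qed
      qed
      then obtain r' where r': "\<forall>e\<in>D - {e0}. r' e \<in> A' e" "inj_on r' (D - {e0})" by blast
      define r where "r = r'(e0 := x)"
      have "\<forall>e\<in>D. r e \<in> A e" using r' x unfolding r_def A'_def by auto
      moreover have "inj_on r D"
      proof (rule inj_onI)
        fix y z assume yz: "y \<in> D" "z \<in> D" "r y = r z"
        show "y = z"
        proof (cases "y = e0"; cases "z = e0")
          assume "y \<noteq> e0" "z \<noteq> e0" then show ?thesis using yz r'(2) unfolding r_def by (auto dest: inj_onD)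
        next
          assume "y = e0" "z \<noteq> e0" then show ?thesis using yz r'(1) unfolding r_def A'_def by auto
        next
          assume "y \<noteq> e0" "z = e0" then show ?thesis using yz r'(1) unfolding r_def A'_def by force
        qed simp
      qed
      ultimately show ?thesis by blast
    qed
  qed
qed

lemma even_cover:
  fixes X :: "nat \<Rightarrow> 'a set" and I :: "nat set"
  assumes fI: "finite I" and fX: "\<forall>l\<in>I. finite (X l)"
    and big: "\<forall>l\<in>I. card (X l \<inter> (\<Union>l'\<in>I-{l}. X l')) \<ge> 3"
  shows "\<exists>Y. (\<forall>l\<in>I. Y l \<subseteq> X l \<and> card (Y l) \<ge> 2) \<and> (\<forall>a. even (card {l\<in>I. a \<in> Y l}))"
proof -
  define N where "N l = X l \<inter> (\<Union>l'\<in>I-{l}. X l')" for l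
  define Oc where "Oc a = {l\<in>I. a \<in> N l}" for a
  define D where "D = {a \<in> (\<Union>l\<in>I. N l). odd (card (Oc a))}"
  define cap where "cap l = card (N l) - 2" for l
  have fN: "finite (N l)" if "l \<in> I" for l using fX that N_def by auto
  have N3: "card (N l) \<ge> 3" if "l \<in> I" for l using big that N_def by auto
  have fO: "finite (Oc a)" for a using fI Oc_def by auto
  have O2: "card (Oc a) \<ge> 2" if aU: "a \<in> (\<Union>l\<in>I. N l)" for a
  proof -
    obtain l where l: "l \<in> I" "a \<in> N l" using aU by blast
    then obtain l' where l': "l' \<in> I" "l' \<noteq> l" "a \<in> X l'" unfolding N_def by blast
    have "a \<in> N l'" using l l' unfolding N_def by blast
    then have "{l, l'} \<subseteq> Oc a" using l l' Oc_def by auto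
    then have "card {l, l'} \<le> card (Oc a)" using fO by (rule card_mono[rotated])
    then show ?thesis using l'(2) by simp
  qed
  have fD: "finite D" unfolding D_def using fI fN by auto
  define A where "A a = Sigma (Oc a) (\<lambda>l. {..<cap l})" for a
  have "\<exists>r. (\<forall>e\<in>D. r e \<in> A e) \<and> inj_on r D"
  proof (rule hall_sdr[OF fD])
    show "\<forall>e\<in>D. finite (A e)" unfolding A_def using fO by auto
    show "\<forall>S\<subseteq>D. card S \<le> card (\<Union>(A ` S))"
    proof (intro allI impI)
      fix S assume S: "S \<subseteq> D"
      have fS: "finite S" using S fD finite_subset by blast
      define L where "L = \<Union>(Oc ` S)"
      have LI: "L \<subseteq> I" unfolding L_def Oc_def by auto
      have fL: "finite L" using LI fI finite_subset by blast
      have UA: "\<Union>(A ` S) = Sigma L (\<lambda>l. {..<cap l})" unfolding A_def L_def by auto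
      have cU: "card (\<Union>(A ` S)) = (\<Sum>l\<in>L. cap l)" unfolding UA using fL by simp
      have "3 * card S = (\<Sum>a\<in>S. 3)" by simp
      also have "\<dots> \<le> (\<Sum>a\<in>S. card (Oc a))"
      proof (rule sum_mono)
        fix a assume "a \<in> S"
        then have "a \<in> D" using S by blast
        then have "odd (card (Oc a))" "card (Oc a) \<ge> 2" using O2 unfolding D_def by auto
        then show "3 \<le> card (Oc a)" by presburger
      qed
      also have "\<dots> = (\<Sum>a\<in>S. \<Sum>l\<in>L. if a \<in> N l then 1 else 0)"
      proof (rule sum.cong[OF refl])
        fix a assume a: "a \<in> S"
        have "Oc a = {l\<in>L. a \<in> N l}" unfolding L_def using a Oc_def by auto
        then show "card (Oc a) = (\<Sum>l\<in>L. if a \<in> N l then 1 else 0)"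
          using fL by (simp add: sum.If_cases Int_def)
      qed
      also have "\<dots> = (\<Sum>l\<in>L. \<Sum>a\<in>S. if a \<in> N l then 1 else 0)" by (rule sum.swap)
      also have "\<dots> = (\<Sum>l\<in>L. card (S \<inter> N l))"
        using fS by (simp add: sum.If_cases Int_def)
      also have "\<dots> \<le> (\<Sum>l\<in>L. 3 * cap l)"
      proof (rule sum_mono)
        fix l assume l: "l \<in> L"
        then have "l \<in> I" using LI by blast
        then have "card (S \<inter> N l) \<le> card (N l)" "card (N l) \<ge> 3" using fN N3 by (auto intro: card_mono)
        then show "card (S \<inter> N l) \<le> 3 * cap l" unfolding cap_def by linarith
      qed
      also have "\<dots> = 3 * (\<Sum>l\<in>L. cap l)" by (simp add: sum_distrib_left)
      finally show "card S \<le> card (\<Union>(A ` S))" using cU by linarith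
    qed
  qed
  then obtain r where r: "\<forall>e\<in>D. r e \<in> A e" "inj_on r D" by blast
  define Y where "Y l = N l - {a\<in>D. fst (r a) = l}" for l
  have "\<forall>l\<in>I. Y l \<subseteq> X l \<and> card (Y l) \<ge> 2"
  proof
    fix l assume l: "l \<in> I"
    have sub: "Y l \<subseteq> X l" unfolding Y_def N_def by auto
    have "r ` {a\<in>D. fst (r a) = l} \<subseteq> {l} \<times> {..<cap l}"
      using r(1) unfolding A_def by force
    then have "card (r ` {a\<in>D. fst (r a) = l}) \<le> card ({l} \<times> {..<cap l})"
      by (intro card_mono) auto
    moreover have "card (r ` {a\<in>D. fst (r a) = l}) = card {a\<in>D. fst (r a) = l}"
      by (rule card_image) (rule inj_on_subset[OF r(2)], auto)
    ultimately have c: "card {a\<in>D. fst (r a) = l} \<le> cap l" by simp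
    have "card (N l) - card {a\<in>D. fst (r a) = l} \<le> card (Y l)"
      unfolding Y_def by (rule diff_card_le_card_Diff) (use fD in auto)
    then have "card (Y l) \<ge> 2" using c N3[OF l] unfolding cap_def by linarith
    then show "Y l \<subseteq> X l \<and> card (Y l) \<ge> 2" using sub by blast
  qed
  moreover have "\<forall>a. even (card {l\<in>I. a \<in> Y l})"
  proof
    fix a
    show "even (card {l\<in>I. a \<in> Y l})"
    proof (cases "a \<in> D")
      case True
      then have "r a \<in> A a" using r(1) by blast
      then have fo: "fst (r a) \<in> Oc a" unfolding A_def by auto
      have "{l\<in>I. a \<in> Y l} = Oc a - {fst (r a)}" unfolding Y_def Oc_def using True by blast
      then have "card {l\<in>I. a \<in> Y l} = card (Oc a) - 1" using fo fO by simp
      moreover have "odd (card (Oc a))" using True D_def by auto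
      ultimately show ?thesis by presburger
    next
      case False
      have eq: "{l\<in>I. a \<in> Y l} = Oc a" unfolding Y_def Oc_def using False by blast
      show ?thesis
      proof (cases "a \<in> (\<Union>l\<in>I. N l)")
        case True then have "\<not> odd (card (Oc a))" using False unfolding D_def by blast
        then show ?thesis using eq by simp
      next
        case False
        then have "Oc a = {}" unfolding Oc_def by auto
        then show ?thesis using eq by (metis card.empty even_zero)
      qed
    qed
  qed
  ultimately show ?thesis by blast
qed


theorem lemma3:
  fixes \<Sigma> :: "'a set" and k n :: nat and X :: "nat \<Rightarrow> 'a set"
  assumes "finite \<Sigma>" and "k > 2" and "n \<ge> 1"
    and "\<And>l. l \<in> {1..n} \<Longrightarrow> X l \<subseteq> \<Sigma> \<and> card (X l) = k"
    and "real (card \<Sigma>) < (real k - 2) * log 2 (real n / 3)"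
  shows "\<exists>i j Y. 1 \<le> i \<and> i < j \<and> j \<le> n \<and>
           (\<forall>l\<in>{i..j}. Y l \<subseteq> X l \<and> card (Y l) \<ge> 2) \<and>
           (\<forall>a\<in>\<Sigma>. even (card {l\<in>{i..j}. a \<in> Y l}))"
proof (rule ccontr)
  assume nz: "\<not> (\<exists>i j Y. 1 \<le> i \<and> i < j \<and> j \<le> n \<and>
           (\<forall>l\<in>{i..j}. Y l \<subseteq> X l \<and> card (Y l) \<ge> 2) \<and>
           (\<forall>a\<in>\<Sigma>. even (card {l\<in>{i..j}. a \<in> Y l})))"
  have fX: "finite (X l)" if "l \<in> {1..n}" for l
    using assms(1) assms(4)[OF that] finite_subset by blast
  have bad: "\<exists>l\<in>{a..b}. card (X l \<inter> (\<Union>l'\<in>{a..b}-{l}. X l')) < 3"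
    if ab: "1 \<le> a" "a < b" "b \<le> n" for a b
  proof (rule ccontr)
    assume "\<not> (\<exists>l\<in>{a..b}. card (X l \<inter> (\<Union>l'\<in>{a..b}-{l}. X l')) < 3)"
    then have "\<forall>l\<in>{a..b}. card (X l \<inter> (\<Union>l'\<in>{a..b}-{l}. X l')) \<ge> 3" by auto
    moreover have "\<forall>l\<in>{a..b}. finite (X l)" using fX ab by auto
    ultimately obtain Y where Y: "\<forall>l\<in>{a..b}. Y l \<subseteq> X l \<and> card (Y l) \<ge> 2"
        "\<forall>x. even (card {l\<in>{a..b}. x \<in> Y l})"
      using even_cover[of "{a..b}" X] by blast
    then show False using nz ab by blast
  qed
  have C: "\<forall>a b. 1 \<le> a \<longrightarrow> a \<le> b \<longrightarrow> b \<le> n \<longrightarrow> 2^t \<le> b - a + 1 \<longrightarrow>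
      (k - 2) * t \<le> card (\<Union>l\<in>{a..b}. X l)" for t
  proof (induction t)
    case 0 then show ?case by simp
  next
    case (Suc t)
    show ?case
    proof (intro allI impI)
      fix a b assume ab: "1 \<le> a" "a \<le> b" "b \<le> n" "2 ^ Suc t \<le> b - a + 1"
      define p where "p = (2::nat) ^ t"
      have p1: "p \<ge> 1" unfolding p_def by simp
      have pab: "2 * p \<le> b - a + 1" using ab(4) unfolding p_def by simp
      then have "a < b" using p1 ab(2) by linarith
      then obtain l where l: "l \<in> {a..b}" and lc: "card (X l \<inter> (\<Union>l'\<in>{a..b}-{l}. X l')) < 3"
        using bad ab by blast
      define W where "W = (\<Union>l'\<in>{a..b}-{l}. X l')"
      define P where "P = X l - W"
      have lI: "l \<in> {1..n}" using l ab by auto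
      have fin: "finite (X l)" using fX lI by blast
      have "X l = (X l \<inter> W) \<union> P" unfolding P_def by blast
      then have "card (X l) = card (X l \<inter> W) + card P"
        using fin unfolding P_def by (metis card_Un_disjoint Diff_disjoint Int_Diff finite_Diff finite_Int inf_commute)
      then have cP: "card P \<ge> k - 2" using lc assms(4)[OF lI] unfolding W_def by linarith
      obtain c d where cd: "1 \<le> c" "c \<le> d" "d \<le> n" "2^t \<le> d - c + 1" "{c..d} \<subseteq> {a..b} - {l}"
      proof (cases "b - l \<le> l - a")
        case True
        have "2^t \<le> (l - 1) - a + 1" using True pab l unfolding p_def by auto
        moreover have "a \<le> l - 1" using True pab l p1 by auto
        moreover have "{a..l - 1} \<subseteq> {a..b} - {l}" using l ab(1) by auto
        ultimately show ?thesis using that[of a "l - 1"] ab l by auto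
      next
        case False
        have "2^t \<le> b - (l + 1) + 1" using False pab l unfolding p_def by auto
        moreover have "l + 1 \<le> b" using False pab l p1 by auto
        moreover have "{l + 1..b} \<subseteq> {a..b} - {l}" using l by auto
        ultimately show ?thesis using that[of "l + 1" b] ab l by auto
      qed
      define UJ where "UJ = (\<Union>l\<in>{c..d}. X l)"
      have IH: "(k - 2) * t \<le> card UJ" using Suc.IH cd unfolding UJ_def by blast
      have disj: "UJ \<inter> P = {}" unfolding UJ_def P_def W_def using cd(5) by blast
      have sub: "UJ \<union> P \<subseteq> (\<Union>l\<in>{a..b}. X l)" unfolding UJ_def P_def using cd(5) l by blast
      have fU: "finite (\<Union>l\<in>{a..b}. X l)"
        using fX ab by (intro finite_UN_I) auto
      have "card (UJ \<union> P) = card UJ + card P"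
        using disj sub fU by (intro card_Un_disjoint) (auto intro: finite_subset)
      moreover have "card (UJ \<union> P) \<le> card (\<Union>l\<in>{a..b}. X l)" using sub fU by (rule card_mono[rotated])
      ultimately show "(k - 2) * Suc t \<le> card (\<Union>l\<in>{a..b}. X l)" using IH cP by simp
    qed
  qed
  obtain t where t: "2^t \<le> n" "n < 2^(t+1)" using ex_power_ivl1[of 2 n] assms(3) by auto
  have "(k - 2) * t \<le> card (\<Union>l\<in>{1..n}. X l)" using C[of t] assms(3) t by auto
  also have "\<dots> \<le> card \<Sigma>"
  proof (rule card_mono[OF assms(1)])
    show "(\<Union>l\<in>{1..n}. X l) \<subseteq> \<Sigma>" using assms(4) by blast
  qed
  finally have st: "(k - 2) * t \<le> card \<Sigma>" .
  have "n < 3 * 2^t" using t(2) by simp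
  then have "real n < real (3 * 2^t)" by (simp only: of_nat_less_iff)
  then have "real n < 3 * 2^t" by simp
  then have "real n / 3 < 2^t" by simp
  then have "log 2 (real n / 3) < log 2 (2^t)" using assms(3) by (subst log_less_cancel_iff) auto
  then have lg: "log 2 (real n / 3) < real t" by simp
  have k2: "real k - 2 > 0" using assms(2) by simp
  have "real (card \<Sigma>) < (real k - 2) * real t" using assms(5) lg k2
    by (meson less_trans mult_strict_left_mono)
  also have "\<dots> = real ((k - 2) * t)" using assms(2) by (simp add: of_nat_diff)
  finally show False using st by linarith
qed

end
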